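(* Consider the $q$-composite random key predistribution scheme on $n$ sensors with key pool size $P_n$ and key ring size $K_n$, where $q$ is a fixed positive integer and $q\le K_n\le P_n$. Let $p_s$ be the probability that the key rings of two sensors share at least $q$ keys. Suppose an adversary captures a uniformly random set of $m=m(n)\ge 1$ sensors and learns all keys in their key rings, and let $p_{\textnormal{compromised}}$ denote the probability that the secure link between two non-captured sensors is compromised, conditioned on these two sensors sharing at least $q$ keys. If $$m = o\!\left(\sqrt{\frac{P_n}{K_n^2}}\right)\quad\text{and}\quad K_n=\omega(1),$$ then $$p_{\textnormal{compromised}}\sim\left(\frac{mK_n}{P_n}\right)^q\qquad\text{and}\qquad \frac{p_{\textnormal{compromised}}}{p_s}\sim q!\left(\frac{m}{K_n}\right)^q .$$
   Context: In the $q$-composite scheme, each sensor independently receives $K_n$ distinct keys chosen uniformly at random among all $K_n$-subsets of a pool of $P_n$ keys; two sensors have a secure link iff their key rings share at least $q$ keys. The secure link between two non-captured sensors is compromised iff every key shared by their key rings belongs to the key ring of at least one captured sensor. Asymptotics are as $n\to\infty$: $x_n=o(y_n)$ means $x_n/y_n\to0$, $x_n=\omega(y_n)$ means $x_n/y_n\to\infty$, and $x_n\sim y_n$ means $x_n/y_n\to 1$. *)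

theory Defs
  imports "HOL-Analysis.Analysis" "HOL-Library.Landau_Symbols"
begin

definition key_rings :: "nat \<Rightarrow> nat \<Rightarrow> nat set set" where
  "key_rings P K = {S. S \<subseteq> {..<P} \<and> card S = K}"

definition p_s :: "nat \<Rightarrow> nat \<Rightarrow> nat \<Rightarrow> real" where
  "p_s P K q =
     real (card {(A, B). A \<in> key_rings P K \<and> B \<in> key_rings P K \<and> q \<le> card (A \<inter> B)})
     / real (card (key_rings P K) ^ 2)"

text \<open>Joint outcomes: key rings A, B of the two non-captured sensors and the list Cs of
  key rings of the m captured sensors (all independent and uniform).\<close>
definition outcomes :: "nat \<Rightarrow> nat \<Rightarrow> nat \<Rightarrow> (nat set \<times> nat set \<times> nat set list) set" where
  "outcomes P K m = {(A, B, Cs). A \<in> key_rings P K \<and> B \<in> key_rings P K \<and>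
                        length Cs = m \<and> set Cs \<subseteq> key_rings P K}"

text \<open>Probability that the link between the two non-captured sensors is compromised
  (every shared key lies in some captured ring), conditioned on sharing at least q keys.\<close>
definition p_compromised :: "nat \<Rightarrow> nat \<Rightarrow> nat \<Rightarrow> nat \<Rightarrow> real" where
  "p_compromised P K q m =
     real (card {(A, B, Cs) \<in> outcomes P K m. q \<le> card (A \<inter> B) \<and> A \<inter> B \<subseteq> \<Union> (set Cs)})
     / real (card {(A, B, Cs) \<in> outcomes P K m. q \<le> card (A \<inter> B)})"

end

theory Submission
  imports Defs
begin


lemma finite_key_rings: "finite (key_rings P K)"
  unfolding key_rings_def by (rule finite_subset[of _ "Pow {..<P}"]) auto

lemma card_key_rings: "card (key_rings P K) = P choose K"
  unfolding key_rings_def using n_subsets[of "{..<P}" K] by simp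

lemma key_ringD: "A \<in> key_rings P K \<Longrightarrow> finite A \<and> A \<subseteq> {..<P} \<and> card A = K"
  unfolding key_rings_def using finite_subset by auto

lemma card_rings_containing:
  assumes "T \<subseteq> {..<P}" "card T \<le> K"
  shows "card {A \<in> key_rings P K. T \<subseteq> A} = (P - card T) choose (K - card T)"
proof -
  have fT: "finite T" using assms(1) finite_subset by blast
  have "bij_betw (\<lambda>A. A - T) {A \<in> key_rings P K. T \<subseteq> A} {B. B \<subseteq> {..<P} - T \<and> card B = K - card T}"
  proof (rule bij_betw_byWitness[where f' = "\<lambda>B. B \<union> T"])
    show "\<forall>a\<in>{A \<in> key_rings P K. T \<subseteq> A}. a - T \<union> T = a" by auto
    show "\<forall>a'\<in>{B. B \<subseteq> {..<P} - T \<and> card B = K - card T}. a' \<union> T - T = a'" by auto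
    show "(\<lambda>A. A - T) ` {A \<in> key_rings P K. T \<subseteq> A} \<subseteq> {B. B \<subseteq> {..<P} - T \<and> card B = K - card T}"
    proof
      fix B assume "B \<in> (\<lambda>A. A - T) ` {A \<in> key_rings P K. T \<subseteq> A}"
      then obtain A where A: "A \<in> key_rings P K" "T \<subseteq> A" "B = A - T" by auto
      then show "B \<in> {B. B \<subseteq> {..<P} - T \<and> card B = K - card T}"
        using key_ringD[OF A(1)] by (auto simp: card_Diff_subset fT)
    qed
    show "(\<lambda>B. B \<union> T) ` {B. B \<subseteq> {..<P} - T \<and> card B = K - card T} \<subseteq> {A \<in> key_rings P K. T \<subseteq> A}"
    proof
      fix A assume "A \<in> (\<lambda>B. B \<union> T) ` {B. B \<subseteq> {..<P} - T \<and> card B = K - card T}"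
      then obtain B where B: "B \<subseteq> {..<P} - T" "card B = K - card T" "A = B \<union> T" by auto
      have fB: "finite B" using B(1) finite_subset by blast
      have BT: "B \<inter> T = {}" using B(1) by auto
      have "card A = card B + card T" using card_Un_disjoint[OF fB fT BT] B(3) by simp
      then show "A \<in> {A \<in> key_rings P K. T \<subseteq> A}" using B assms unfolding key_rings_def by auto
    qed
  qed
  then have "card {A \<in> key_rings P K. T \<subseteq> A} = card {B. B \<subseteq> {..<P} - T \<and> card B = K - card T}"
    by (rule bij_betw_same_card)
  also have "\<dots> = card ({..<P} - T) choose (K - card T)" by (rule n_subsets) simp
  also have "card ({..<P} - T) = P - card T" using assms by (simp add: card_Diff_subset fT)
  finally show ?thesis .
qed

definition ff :: "nat \<Rightarrow> nat \<Rightarrow> real" where "ff n t = (\<Prod>j<t. real n - real j)"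

lemma binom_absorb_real: "real (Suc t) * real (n choose Suc t) = (real n - real t) * real (n choose t)"
proof (cases "t \<le> n")
  case True
  have "Suc t * (n choose Suc t) = (n - t) * (n choose t)"
    using binomial_absorption[of t n] binomial_absorb_comp[of n t] by simp
  then have "real (Suc t * (n choose Suc t)) = real ((n - t) * (n choose t))" by simp
  then show ?thesis using True by (simp only: of_nat_mult of_nat_diff)
next
  case False then show ?thesis by (simp add: binomial_eq_0)
qed

lemma binom_ff: "real (n choose t) * fact t = ff n t"
proof (induction t)
  case 0 then show ?case by (simp add: ff_def)
next
  case (Suc t)
  have "real (n choose Suc t) * fact (Suc t) = (real (Suc t) * real (n choose Suc t)) * fact t"
    by (simp add: algebra_simps)
  also have "\<dots> = ((real n - real t) * real (n choose t)) * fact t"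
    by (simp only: binom_absorb_real)
  also have "\<dots> = (real n - real t) * (real (n choose t) * fact t)" by simp
  also have "\<dots> = ff n (Suc t)" using Suc by (simp add: ff_def)
  finally show ?case .
qed

lemma ff_ratio:
  assumes "t \<le> K" "K \<le> P"
  shows "real (P choose K) * ff K t = real ((P - t) choose (K - t)) * ff P t"
proof -
  have "(P choose K) * (K choose t) = (P choose t) * ((P - t) choose (K - t))"
    using choose_mult[OF assms] .
  then have "real (P choose K) * (real (K choose t) * fact t) = real ((P - t) choose (K - t)) * (real (P choose t) * fact t)"
    by (metis (mono_tags, opaque_lifting) mult.assoc mult.commute of_nat_mult)
  then show ?thesis by (simp add: binom_ff)
qed

lemma ff_pos: "t \<le> n \<Longrightarrow> ff n t > 0"
  unfolding ff_def by (intro prod_pos) auto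

lemma ff_le: "t \<le> n \<Longrightarrow> ff n t \<le> real n ^ t"
proof -
  assume "t \<le> n"
  have "ff n t \<le> (\<Prod>j<t. real n)" unfolding ff_def using \<open>t \<le> n\<close> by (intro prod_mono) auto
  then show ?thesis by simp
qed

lemma ff_ge: "t \<le> n \<Longrightarrow> ff n t \<ge> (real n - real t) ^ t"
proof -
  assume "t \<le> n"
  have "(\<Prod>j<t. real n - real t) \<le> ff n t" unfolding ff_def using \<open>t \<le> n\<close> by (intro prod_mono) auto
  then show ?thesis by simp
qed

lemma binom_ratio_bounds:
  assumes "t \<le> K" "K \<le> P"
  shows "real ((P - t) choose (K - t)) * real P ^ t \<le> real (P choose K) * real K ^ t"
    and "real ((P - t) choose (K - t)) * real P ^ t \<ge> real (P choose K) * (real K - real t) ^ t"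
proof -
  have e: "real (P choose K) * ff K t = real ((P - t) choose (K - t)) * ff P t" by (rule ff_ratio[OF assms])
  have fp: "ff P t > 0" using assms by (intro ff_pos) auto
  have a: "ff K t * real P ^ t \<le> ff P t * real K ^ t"
  proof -
    have "(\<Prod>j<t. (real K - real j) * real P) \<le> (\<Prod>j<t. (real P - real j) * real K)"
      using assms by (intro prod_mono) (auto simp: algebra_simps intro!: mult_left_mono)
    then show ?thesis by (simp add: ff_def prod.distrib)
  qed
  have b: "ff K t * real P ^ t \<ge> ff P t * (real K - real t) ^ t"
  proof -
    have "(\<Prod>j<t. (real K - real t) * (real P - real j)) \<le> (\<Prod>j<t. (real K - real j) * real P)"
      using assms by (intro prod_mono conjI mult_mono) auto
    then show ?thesis by (simp add: ff_def prod.distrib mult.commute)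
  qed
  have c0: "real (P choose K) \<ge> 0" by simp
  have "real ((P - t) choose (K - t)) * real P ^ t * ff P t = real (P choose K) * (ff K t * real P ^ t)"
    using e by (simp add: algebra_simps)
  also have "\<dots> \<le> real (P choose K) * (ff P t * real K ^ t)" using a c0 by (rule mult_left_mono)
  finally show "real ((P - t) choose (K - t)) * real P ^ t \<le> real (P choose K) * real K ^ t"
    using fp by (simp add: algebra_simps)
  have "real (P choose K) * (real K - real t) ^ t * ff P t = real (P choose K) * (ff P t * (real K - real t) ^ t)"
    by (simp add: algebra_simps)
  also have "\<dots> \<le> real (P choose K) * (ff K t * real P ^ t)" using b c0 by (rule mult_left_mono)
  also have "\<dots> = real ((P - t) choose (K - t)) * real P ^ t * ff P t"
    using e by (simp add: algebra_simps)
  finally show "real ((P - t) choose (K - t)) * real P ^ t \<ge> real (P choose K) * (real K - real t) ^ t"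
    using fp by (simp add: algebra_simps)
qed



lemma card_lists_prod:
  assumes "\<And>i. finite (S i)"
  shows "card {Cs. length Cs = m \<and> (\<forall>i<m. Cs!i \<in> S i)} = (\<Prod>i<m. card (S i))"
  using assms
proof (induction m arbitrary: S)
  case 0
  have "{Cs. length Cs = 0 \<and> (\<forall>i<0. Cs!i \<in> S i)} = {[]}" by auto
  then show ?case by simp
next
  case (Suc m)
  have eq: "{Cs. length Cs = Suc m \<and> (\<forall>i<Suc m. Cs!i \<in> S i)} =
      (\<lambda>(c,xs). c#xs) ` (S 0 \<times> {xs. length xs = m \<and> (\<forall>i<m. xs!i \<in> S (Suc i))})"
  proof (intro set_eqI iffI)
    fix Cs assume "Cs \<in> {Cs. length Cs = Suc m \<and> (\<forall>i<Suc m. Cs!i \<in> S i)}"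
    then have h: "length Cs = Suc m" "\<forall>i<Suc m. Cs!i \<in> S i" by auto
    then obtain c xs where cx: "Cs = c # xs" by (cases Cs) auto
    have "c \<in> S 0" using h cx by auto
    moreover have "xs \<in> {xs. length xs = m \<and> (\<forall>i<m. xs!i \<in> S (Suc i))}"
      using h cx by auto
    ultimately show "Cs \<in> (\<lambda>(c,xs). c#xs) ` (S 0 \<times> {xs. length xs = m \<and> (\<forall>i<m. xs!i \<in> S (Suc i))})"
      using cx by auto
  next
    fix Cs assume "Cs \<in> (\<lambda>(c,xs). c#xs) ` (S 0 \<times> {xs. length xs = m \<and> (\<forall>i<m. xs!i \<in> S (Suc i))})"
    then obtain c xs where cx: "Cs = c # xs" "c \<in> S 0" "length xs = m" "\<forall>i<m. xs!i \<in> S (Suc i)" by auto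
    show "Cs \<in> {Cs. length Cs = Suc m \<and> (\<forall>i<Suc m. Cs!i \<in> S i)}"
      using cx by (auto simp: less_Suc_eq_0_disj)
  qed
  have inj: "inj_on (\<lambda>(c,xs). c#xs) X" for X :: "('a \<times> 'a list) set"
    by (auto simp: inj_on_def)
  have "card {Cs. length Cs = Suc m \<and> (\<forall>i<Suc m. Cs!i \<in> S i)} =
        card (S 0) * card {xs. length xs = m \<and> (\<forall>i<m. xs!i \<in> S (Suc i))}"
    unfolding eq by (simp add: card_image[OF inj] card_cartesian_product)
  also have "\<dots> = card (S 0) * (\<Prod>i<m. card (S (Suc i)))" using Suc.IH[of "\<lambda>i. S (Suc i)"] Suc.prems by simp
  also have "\<dots> = (\<Prod>i<Suc m. card (S i))" by (rule prod.lessThan_Suc_shift[symmetric])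
  finally show ?case .
qed

definition LL :: "nat \<Rightarrow> nat \<Rightarrow> nat \<Rightarrow> nat set list set" where
  "LL P K m = {Cs. length Cs = m \<and> set Cs \<subseteq> key_rings P K}"

lemma finite_LL: "finite (LL P K m)"
  unfolding LL_def using finite_lists_length_eq[OF finite_key_rings] by (simp add: conj_commute)

lemma card_LL: "card (LL P K m) = (P choose K) ^ m"
  unfolding LL_def using card_lists_length_eq[OF finite_key_rings, of P K m]
  by (simp add: conj_commute card_key_rings)

lemma card_lists_sub:
  assumes "\<And>j. j < m \<Longrightarrow> T j \<subseteq> {..<P} \<and> card (T j) \<le> K"
  shows "card {Cs \<in> LL P K m. \<forall>j<m. T j \<subseteq> Cs!j} = (\<Prod>j<m. (P - card (T j)) choose (K - card (T j)))"
proof -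
  have "{Cs \<in> LL P K m. \<forall>j<m. T j \<subseteq> Cs!j} = {Cs. length Cs = m \<and> (\<forall>i<m. Cs!i \<in> {A \<in> key_rings P K. T i \<subseteq> A})}"
    unfolding LL_def by (auto simp: all_set_conv_all_nth; metis in_set_conv_nth)
  also have "card \<dots> = (\<Prod>i<m. card {A \<in> key_rings P K. T i \<subseteq> A})"
    by (rule card_lists_prod) (simp add: finite_key_rings)
  also have "\<dots> = (\<Prod>j<m. (P - card (T j)) choose (K - card (T j)))"
    using assms by (intro prod.cong refl card_rings_containing) auto
  finally show ?thesis .
qed

lemma lists_sub_bounds:
  assumes "\<And>j. j < m \<Longrightarrow> T j \<subseteq> {..<P} \<and> card (T j) \<le> t0" "t0 \<le> K" "K \<le> P" "0 < P"
  shows "real (card {Cs \<in> LL P K m. \<forall>j<m. T j \<subseteq> Cs!j}) \<le> real (P choose K) ^ m * (real K / real P) ^ (\<Sum>j<m. card (T j))"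
    and "real (card {Cs \<in> LL P K m. \<forall>j<m. T j \<subseteq> Cs!j}) \<ge> real (P choose K) ^ m * ((real K - real t0) / real P) ^ (\<Sum>j<m. card (T j))"
proof -
  have e: "real (card {Cs \<in> LL P K m. \<forall>j<m. T j \<subseteq> Cs!j}) = (\<Prod>j<m. real ((P - card (T j)) choose (K - card (T j))))"
  proof -
    have hj: "\<And>j. j<m \<Longrightarrow> T j \<subseteq> {..<P} \<and> card (T j) \<le> K" using assms(1,2) le_trans by blast
    show ?thesis using hj by (subst card_lists_sub) auto
  qed
  have Pp: "real P > 0" using assms by simp
  have up: "real ((P - card (T j)) choose (K - card (T j))) \<le> real (P choose K) * (real K / real P) ^ card (T j)"
    if "j < m" for j
  proof -
    have "card (T j) \<le> K" using assms that by force
    from binom_ratio_bounds(1)[OF this assms(3)] Pp show ?thesis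
      by (simp add: power_divide field_simps)
  qed
  have lo: "real ((P - card (T j)) choose (K - card (T j))) \<ge> real (P choose K) * ((real K - real t0) / real P) ^ card (T j)"
    if "j < m" for j
  proof -
    have ct: "card (T j) \<le> t0" using assms that by force
    then have ck: "card (T j) \<le> K" using assms by linarith
    have "((real K - real t0) / real P) ^ card (T j) \<le> ((real K - real (card (T j))) / real P) ^ card (T j)"
      using ct assms Pp by (intro power_mono divide_right_mono) auto
    then have "real (P choose K) * ((real K - real t0) / real P) ^ card (T j) \<le> real (P choose K) * ((real K - real (card (T j))) / real P) ^ card (T j)"
      by (intro mult_left_mono) auto
    also have "\<dots> \<le> real ((P - card (T j)) choose (K - card (T j)))"
      using binom_ratio_bounds(2)[OF ck assms(3)] Pp by (simp add: power_divide field_simps)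
    finally show ?thesis .
  qed
  have "(\<Prod>j<m. real ((P - card (T j)) choose (K - card (T j)))) \<le> (\<Prod>j<m. real (P choose K) * (real K / real P) ^ card (T j))"
    using up by (intro prod_mono) auto
  also have "\<dots> = real (P choose K) ^ m * (real K / real P) ^ (\<Sum>j<m. card (T j))"
    by (simp add: prod.distrib power_sum)
  finally show "real (card {Cs \<in> LL P K m. \<forall>j<m. T j \<subseteq> Cs!j}) \<le> real (P choose K) ^ m * (real K / real P) ^ (\<Sum>j<m. card (T j))"
    using e by simp
  have "real (P choose K) ^ m * ((real K - real t0) / real P) ^ (\<Sum>j<m. card (T j)) = (\<Prod>j<m. real (P choose K) * ((real K - real t0) / real P) ^ card (T j))"
    by (simp add: prod.distrib power_sum)
  also have "\<dots> \<le> (\<Prod>j<m. real ((P - card (T j)) choose (K - card (T j))))"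
    using lo assms Pp by (intro prod_mono conjI) auto
  finally show "real (card {Cs \<in> LL P K m. \<forall>j<m. T j \<subseteq> Cs!j}) \<ge> real (P choose K) ^ m * ((real K - real t0) / real P) ^ (\<Sum>j<m. card (T j))"
    using e by simp
qed



lemma fiber_sum:
  fixes m :: nat
  assumes "finite Q" "\<phi> \<in> Q \<rightarrow>\<^sub>E {..<m}"
  shows "(\<Sum>j<m. card {k\<in>Q. \<phi> k = j}) = card Q"
proof -
  have "(\<Sum>j<m. \<Sum>k\<in>{k. k\<in>Q \<and> \<phi> k = j}. (1::nat)) = (\<Sum>k\<in>Q. 1)"
    using assms by (intro sum.group) auto
  then show ?thesis by simp
qed

lemma cover_bounds:
  assumes Q: "Q \<subseteq> {..<P}" "card Q = q" and qK: "q < K" and KP: "K \<le> P"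
  shows "real (card {Cs \<in> LL P K m. Q \<subseteq> \<Union>(set Cs)}) \<le> real (P choose K)^m * (real m * real K / real P)^q"
    and "real (card {Cs \<in> LL P K m. Q \<subseteq> \<Union>(set Cs)}) \<ge> real (P choose K)^m *
          (real m ^ q * ((real K - real q) / real P)^q - real q * real m ^ (q+1) * (real K / real P)^(q+1))"
proof -
  have fQ: "finite Q" using Q finite_subset by blast
  have P0: "0 < P" using qK KP by linarith
  define N where "N = real (P choose K)"
  define x where "x = real K / real P"
  define Cov where "Cov = {Cs \<in> LL P K m. Q \<subseteq> \<Union>(set Cs)}"
  define \<Phi> where "\<Phi> = Q \<rightarrow>\<^sub>E {..<m}"
  define E where "E \<phi> = {Cs \<in> LL P K m. \<forall>j<m. {k\<in>Q. \<phi> k = j} \<subseteq> Cs!j}" for \<phi> :: "nat \<Rightarrow> nat"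
  have finPhi: "finite \<Phi>" unfolding \<Phi>_def using fQ by (intro finite_PiE) auto
  have cardPhi: "card \<Phi> = m ^ q" unfolding \<Phi>_def using fQ Q by (simp add: card_PiE)
  have finCov: "finite Cov" unfolding Cov_def using finite_LL by simp
  have Ebounds: "real (card (E \<phi>)) \<le> N^m * x^q" "real (card (E \<phi>)) \<ge> N^m * ((real K - real q) / real P)^q"
    if "\<phi> \<in> \<Phi>" for \<phi>
  proof -
    have T: "\<And>j. j < m \<Longrightarrow> {k\<in>Q. \<phi> k = j} \<subseteq> {..<P} \<and> card {k\<in>Q. \<phi> k = j} \<le> q"
      using Q fQ by (auto intro: card_mono)
    have s: "(\<Sum>j<m. card {k\<in>Q. \<phi> k = j}) = q" using fiber_sum[OF fQ] that Q unfolding \<Phi>_def by simp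
    show "real (card (E \<phi>)) \<le> N^m * x^q"
      using lists_sub_bounds(1)[of m "\<lambda>j. {k\<in>Q. \<phi> k = j}" P q K, OF T _ KP P0] qK unfolding E_def N_def x_def s by simp
    show "real (card (E \<phi>)) \<ge> N^m * ((real K - real q) / real P)^q"
      using lists_sub_bounds(2)[of m "\<lambda>j. {k\<in>Q. \<phi> k = j}" P q K, OF T _ KP P0] qK unfolding E_def N_def x_def s by simp
  qed
  have sub: "Cov \<subseteq> (\<Union>\<phi>\<in>\<Phi>. E \<phi>)"
  proof
    fix Cs assume "Cs \<in> Cov"
    then have Cs: "Cs \<in> LL P K m" "Q \<subseteq> \<Union>(set Cs)" by (auto simp: Cov_def)
    have len: "length Cs = m" using Cs(1) by (simp add: LL_def)
    have ex: "\<exists>i. i < m \<and> k \<in> Cs!i" if kQ: "k \<in> Q" for k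
    proof -
      obtain C where "C \<in> set Cs" "k \<in> C" using Cs(2) kQ by auto
      then show ?thesis using len by (metis in_set_conv_nth)
    qed
    have sm: "(SOME i. i < m \<and> k \<in> Cs!i) < m \<and> k \<in> Cs!(SOME i. i < m \<and> k \<in> Cs!i)" if "k \<in> Q" for k
      by (rule someI_ex[OF ex[OF that]])
    define \<phi> where "\<phi> = restrict (\<lambda>k. SOME i. i < m \<and> k \<in> Cs!i) Q"
    have "\<phi> \<in> \<Phi>" unfolding \<Phi>_def \<phi>_def using sm by auto
    moreover have "Cs \<in> E \<phi>" unfolding E_def \<phi>_def using Cs(1) sm by auto
    ultimately show "Cs \<in> (\<Union>\<phi>\<in>\<Phi>. E \<phi>)" by blast
  qed
  have "card Cov \<le> card (\<Union>\<phi>\<in>\<Phi>. E \<phi>)"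
    using sub by (intro card_mono) (auto simp: E_def finite_LL finPhi)
  also have "\<dots> \<le> (\<Sum>\<phi>\<in>\<Phi>. card (E \<phi>))" by (rule card_UN_le[OF finPhi])
  finally have "real (card Cov) \<le> (\<Sum>\<phi>\<in>\<Phi>. real (card (E \<phi>)))" by (simp flip: of_nat_sum)
  also have "\<dots> \<le> (\<Sum>\<phi>\<in>\<Phi>. N^m * x^q)" using Ebounds(1) by (intro sum_mono) auto
  also have "\<dots> = N^m * (real m * real K / real P)^q"
    using cardPhi by (simp add: x_def power_mult_distrib power_divide)
  finally show "real (card {Cs \<in> LL P K m. Q \<subseteq> \<Union>(set Cs)}) \<le> real (P choose K)^m * (real m * real K / real P)^q"
    unfolding Cov_def N_def .
  define F where "F \<phi> = {Cs \<in> E \<phi>. \<forall>k\<in>Q. \<forall>i<\<phi> k. k \<notin> Cs!i}" for \<phi> :: "nat \<Rightarrow> nat"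
  have finF: "finite (F \<phi>)" for \<phi> unfolding F_def E_def using finite_LL by simp
  have finE: "finite (E \<phi>)" for \<phi> unfolding E_def using finite_LL by simp
  have FCov: "(\<Union>\<phi>\<in>\<Phi>. F \<phi>) \<subseteq> Cov"
  proof safe
    fix \<phi> Cs assume h: "\<phi> \<in> \<Phi>" "Cs \<in> F \<phi>"
    then have Cs: "Cs \<in> LL P K m" "\<forall>j<m. {k\<in>Q. \<phi> k = j} \<subseteq> Cs!j" by (auto simp: F_def E_def)
    have len: "length Cs = m" using Cs(1) by (simp add: LL_def)
    have "Q \<subseteq> \<Union>(set Cs)"
    proof
      fix k assume k: "k \<in> Q"
      then have "\<phi> k < m" using h(1) by (auto simp: \<Phi>_def)
      then have "k \<in> Cs!(\<phi> k)" "Cs!(\<phi> k) \<in> set Cs" using Cs(2) k len by auto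
      then show "k \<in> \<Union>(set Cs)" by blast
    qed
    then show "Cs \<in> Cov" using Cs(1) by (simp add: Cov_def)
  qed
  have disj: "\<forall>\<phi>\<in>\<Phi>. \<forall>\<psi>\<in>\<Phi>. \<phi> \<noteq> \<psi> \<longrightarrow> F \<phi> \<inter> F \<psi> = {}"
  proof (intro ballI impI)
    fix \<phi> \<psi> assume h: "\<phi> \<in> \<Phi>" "\<psi> \<in> \<Phi>" "\<phi> \<noteq> \<psi>"
    show "F \<phi> \<inter> F \<psi> = {}"
    proof (rule ccontr)
      assume "F \<phi> \<inter> F \<psi> \<noteq> {}"
      then obtain Cs where Cs: "Cs \<in> F \<phi>" "Cs \<in> F \<psi>" by blast
      have "\<phi> k = \<psi> k" if k: "k \<in> Q" for k
      proof -
        have lt: "\<phi> k < m" "\<psi> k < m" using h k by (auto simp: \<Phi>_def)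
        have "k \<in> Cs!(\<phi> k)" "k \<in> Cs!(\<psi> k)" using Cs k lt by (auto simp: F_def E_def)
        moreover have "\<forall>i<\<phi> k. k \<notin> Cs!i" "\<forall>i<\<psi> k. k \<notin> Cs!i" using Cs k by (auto simp: F_def)
        ultimately show ?thesis by (meson linorder_neqE_nat)
      qed
      then have "\<phi> = \<psi>" using h(1,2) unfolding \<Phi>_def by (metis PiE_ext)
      then show False using h(3) by simp
    qed
  qed
  have Fbound: "real (card (F \<phi>)) \<ge> real (card (E \<phi>)) - real q * real m * (N^m * x^(q+1))"
    if ph: "\<phi> \<in> \<Phi>" for \<phi>
  proof -
    define W where "W = (SIGMA k:Q. {..<\<phi> k})"
    define G where "G w = E \<phi> \<inter> {Cs. fst w \<in> Cs!(snd w)}" for w :: "nat \<times> nat"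
    have finW: "finite W" unfolding W_def using fQ by auto
    have cW: "card W \<le> q * m"
    proof -
      have "card W = (\<Sum>k\<in>Q. \<phi> k)" unfolding W_def using fQ by simp
      also have "\<dots> \<le> (\<Sum>k\<in>Q. m)" using ph by (intro sum_mono) (force simp: \<Phi>_def PiE_iff)
      finally show ?thesis using Q by simp
    qed
    have Esub: "E \<phi> \<subseteq> F \<phi> \<union> (\<Union>w\<in>W. G w)"
      unfolding F_def G_def W_def by auto
    have Gb: "real (card (G w)) \<le> N^m * x^(q+1)" if w: "w \<in> W" for w
    proof -
      obtain k i where ki: "w = (k, i)" "k \<in> Q" "i < \<phi> k" using w unfolding W_def by auto
      have im: "i < m" using ki ph PiE_mem[of \<phi> Q "\<lambda>_. {..<m}" k] by (auto simp: \<Phi>_def)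
      define T where "T j = {k'\<in>Q. \<phi> k' = j} \<union> (if j = i then {k} else {})" for j
      have Geq: "G w = {Cs \<in> LL P K m. \<forall>j<m. T j \<subseteq> Cs!j}"
        unfolding G_def E_def T_def using ki im by auto
      have cT: "card (T j) = card {k'\<in>Q. \<phi> k' = j} + (if j = i then 1 else 0)" for j
        unfolding T_def using ki fQ by (auto)
      have sT: "(\<Sum>j<m. card (T j)) = q + 1"
        using fiber_sum[OF fQ, of \<phi> m] ph Q im unfolding cT \<Phi>_def by (simp add: sum.distrib)
      have Tb: "\<And>j. j < m \<Longrightarrow> T j \<subseteq> {..<P} \<and> card (T j) \<le> q + 1"
      proof -
        fix j assume "j < m"
        have "card {k'\<in>Q. \<phi> k' = j} \<le> q" using Q fQ by (auto intro: card_mono)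
        then show "T j \<subseteq> {..<P} \<and> card (T j) \<le> q + 1" using Q ki unfolding cT by (auto simp: T_def)
      qed
      show ?thesis using lists_sub_bounds(1)[of m T P "q+1" K, OF Tb _ KP P0] qK unfolding Geq sT N_def x_def by simp
    qed
    have "card (E \<phi>) \<le> card (F \<phi> \<union> (\<Union>w\<in>W. G w))"
      using Esub finF finW by (intro card_mono) (auto simp: G_def finE)
    also have "\<dots> \<le> card (F \<phi>) + card (\<Union>w\<in>W. G w)" by (rule card_Un_le)
    also have "\<dots> \<le> card (F \<phi>) + (\<Sum>w\<in>W. card (G w))" using card_UN_le[OF finW] by simp
    finally have "real (card (E \<phi>)) \<le> real (card (F \<phi>)) + (\<Sum>w\<in>W. real (card (G w)))"
      by (simp flip: of_nat_sum of_nat_add)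
    also have "(\<Sum>w\<in>W. real (card (G w))) \<le> (\<Sum>w\<in>W. N^m * x^(q+1))" using Gb by (intro sum_mono) auto
    also have "\<dots> = real (card W) * (N^m * x^(q+1))" by simp
    also have "\<dots> \<le> real (q * m) * (N^m * x^(q+1))"
      using cW by (intro mult_right_mono) (simp_all add: N_def x_def flip: of_nat_mult)
    finally show ?thesis by simp
  qed
  have "real (card Cov) \<ge> real (card (\<Union>\<phi>\<in>\<Phi>. F \<phi>))"
    using FCov finCov by (simp add: card_mono)
  also have "card (\<Union>\<phi>\<in>\<Phi>. F \<phi>) = (\<Sum>\<phi>\<in>\<Phi>. card (F \<phi>))"
    using finPhi finF disj by (intro card_UN_disjoint) auto
  finally have "real (card Cov) \<ge> (\<Sum>\<phi>\<in>\<Phi>. real (card (F \<phi>)))" by simp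
  moreover have "(\<Sum>\<phi>\<in>\<Phi>. real (card (F \<phi>))) \<ge> (\<Sum>\<phi>\<in>\<Phi>. N^m * ((real K - real q) / real P)^q - real q * real m * (N^m * x^(q+1)))"
    using Fbound Ebounds(2) by (intro sum_mono) fastforce
  moreover have "(\<Sum>\<phi>\<in>\<Phi>. N^m * ((real K - real q) / real P)^q - real q * real m * (N^m * x^(q+1)))
      = N^m * (real m ^ q * ((real K - real q) / real P)^q - real q * real m ^ (q+1) * x^(q+1))"
    using cardPhi by (simp add: algebra_simps)
  ultimately show "real (card {Cs \<in> LL P K m. Q \<subseteq> \<Union>(set Cs)}) \<ge> real (P choose K)^m *
          (real m ^ q * ((real K - real q) / real P)^q - real q * real m ^ (q+1) * (real K / real P)^(q+1))"
    unfolding Cov_def N_def x_def by linarith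
qed



lemma card_filter_sum: "finite A \<Longrightarrow> card {x\<in>A. P x} = (\<Sum>x\<in>A. if P x then 1 else 0)"
  by (simp add: sum.If_cases Int_def conj_commute)

lemma M_formula:
  assumes "j \<le> K"
  shows "(\<Sum>p\<in>key_rings P K \<times> key_rings P K. card (fst p \<inter> snd p) choose j) = (P choose j) * ((P - j) choose (K - j))^2"
proof -
  let ?R = "key_rings P K"
  let ?Pj = "{Q. Q \<subseteq> {..<P} \<and> card Q = j}"
  have finPj: "finite ?Pj" by (rule finite_subset[of _ "Pow {..<P}"]) auto
  have 1: "card (A \<inter> B) choose j = (\<Sum>Q\<in>?Pj. (if Q \<subseteq> A then 1 else 0) * (if Q \<subseteq> B then 1 else 0))"
    if AB: "A \<in> ?R" "B \<in> ?R" for A B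
  proof -
    have fAB: "finite (A \<inter> B)" using key_ringD[OF AB(1)] by auto
    have "card (A \<inter> B) choose j = card {Q. Q \<subseteq> A \<inter> B \<and> card Q = j}" using n_subsets[OF fAB] by simp
    also have "{Q. Q \<subseteq> A \<inter> B \<and> card Q = j} = {Q\<in>?Pj. Q \<subseteq> A \<and> Q \<subseteq> B}" using key_ringD[OF AB(1)] by auto
    also have "card \<dots> = (\<Sum>Q\<in>?Pj. if Q \<subseteq> A \<and> Q \<subseteq> B then 1 else 0)"
      using finPj by (rule card_filter_sum)
    also have "\<dots> = (\<Sum>Q\<in>?Pj. (if Q \<subseteq> A then 1 else 0) * (if Q \<subseteq> B then 1 else 0))"
      by (intro sum.cong) auto
    finally show ?thesis .
  qed
  have cnt: "(\<Sum>A\<in>?R. if Q \<subseteq> A then 1 else 0) = (P - j) choose (K - j)" if "Q \<in> ?Pj" for Q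
  proof -
    have "(\<Sum>A\<in>?R. if Q \<subseteq> A then 1 else (0::nat)) = card {A\<in>?R. Q \<subseteq> A}"
      using finite_key_rings by (rule card_filter_sum[symmetric])
    also have "\<dots> = (P - j) choose (K - j)" using that assms card_rings_containing[of Q P K] by auto
    finally show ?thesis .
  qed
  have "(\<Sum>p\<in>?R \<times> ?R. card (fst p \<inter> snd p) choose j) = (\<Sum>A\<in>?R. \<Sum>B\<in>?R. card (A \<inter> B) choose j)"
    by (simp add: sum.cartesian_product case_prod_beta)
  also have "\<dots> = (\<Sum>A\<in>?R. \<Sum>B\<in>?R. \<Sum>Q\<in>?Pj. (if Q \<subseteq> A then 1 else 0) * (if Q \<subseteq> B then 1 else 0))"
    using 1 by (intro sum.cong refl) auto
  also have "\<dots> = (\<Sum>Q\<in>?Pj. \<Sum>A\<in>?R. \<Sum>B\<in>?R. (if Q \<subseteq> A then 1 else 0) * (if Q \<subseteq> B then 1 else 0))"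
  proof -
    have "(\<Sum>A\<in>?R. \<Sum>B\<in>?R. \<Sum>Q\<in>?Pj. (if Q \<subseteq> A then 1 else 0) * (if Q \<subseteq> B then 1 else 0))
        = (\<Sum>A\<in>?R. \<Sum>Q\<in>?Pj. \<Sum>B\<in>?R. (if Q \<subseteq> A then 1 else 0) * (if Q \<subseteq> B then (1::nat) else 0))"
      by (rule sum.cong[OF refl], rule sum.swap)
    also have "\<dots> = (\<Sum>Q\<in>?Pj. \<Sum>A\<in>?R. \<Sum>B\<in>?R. (if Q \<subseteq> A then 1 else 0) * (if Q \<subseteq> B then 1 else 0))"
      by (rule sum.swap)
    finally show ?thesis .
  qed
  also have "\<dots> = (\<Sum>Q\<in>?Pj. (\<Sum>A\<in>?R. if Q \<subseteq> A then 1 else 0) * (\<Sum>B\<in>?R. if Q \<subseteq> B then 1 else 0))"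
    by (simp only: sum_product)
  also have "\<dots> = (\<Sum>Q\<in>?Pj. ((P - j) choose (K - j))^2)"
    using cnt by (intro sum.cong refl) (simp add: power2_eq_square)
  also have "\<dots> = (P choose j) * ((P - j) choose (K - j))^2"
    using n_subsets[of "{..<P}" j] by simp
  finally show ?thesis .
qed

lemma pointwise_ge: "(if q \<le> s then 1 else 0) \<le> (s choose q)"
  by (simp add: zero_less_binomial Suc_leI)

lemma pointwise_eq: "real (if s = q then 1 else 0) \<ge> real (s choose q) - real (q+1) * real (s choose (q+1))"
proof (cases "s \<le> q")
  case True
  then show ?thesis by (cases "s = q") (auto simp: binomial_eq_0)
next
  case False
  have "real (q+1) * real (s choose (q+1)) = (real s - real q) * real (s choose q)"
    using binom_absorb_real[of q s] by simp
  moreover have "real s - real q \<ge> 1" using False by simp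
  moreover have "0 \<le> (real s - real q - 1) * real (s choose q)"
    using \<open>real s - real q \<ge> 1\<close> by (intro mult_nonneg_nonneg) auto
  ultimately have "real (q+1) * real (s choose (q+1)) \<ge> real (s choose q)"
    by (simp add: algebra_simps)
  then show ?thesis using False by simp
qed

lemma M_ratio:
  assumes "q + 1 \<le> K" "K \<le> P"
  shows "real (q+1) * real ((P choose (q+1)) * ((P - (q+1)) choose (K - (q+1)))^2) * (real P - real q)
       = real ((P choose q) * ((P - q) choose (K - q))^2) * (real K - real q)^2"
proof -
  have a: "real (q+1) * real (P choose (q+1)) = (real P - real q) * real (P choose q)"
    using binom_absorb_real[of q P] by simp
  have "(K - q) * ((P - q) choose (K - q)) = (P - q) * ((P - q - 1) choose (K - q - 1))"
    using assms by (intro times_binomial_minus1_eq) auto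
  then have "real (K - q) * real ((P - q) choose (K - q)) = real (P - q) * real ((P - (q+1)) choose (K - (q+1)))"
    by (metis diff_diff_left of_nat_mult)
  then have b: "(real K - real q) * real ((P - q) choose (K - q)) = (real P - real q) * real ((P - (q+1)) choose (K - (q+1)))"
    using assms by (simp add: of_nat_diff)
  have "real (q+1) * real ((P choose (q+1)) * ((P - (q+1)) choose (K - (q+1)))^2) * (real P - real q)
      = (real (q+1) * real (P choose (q+1))) * ((real P - real q) * real ((P - (q+1)) choose (K - (q+1)))) * real ((P - (q+1)) choose (K - (q+1)))"
    by (simp add: power2_eq_square algebra_simps)
  also have "\<dots> = real (P choose q) * ((real K - real q) * real ((P - q) choose (K - q))) * ((real P - real q) * real ((P - (q+1)) choose (K - (q+1))))"
    unfolding a b by (simp add: algebra_simps)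
  also have "\<dots> = real (P choose q) * ((real K - real q) * real ((P - q) choose (K - q))) * ((real K - real q) * real ((P - q) choose (K - q)))"
    unfolding b ..
  also have "\<dots> = real ((P choose q) * ((P - q) choose (K - q))^2) * (real K - real q)^2"
    by (simp add: power2_eq_square algebra_simps)
  finally show ?thesis .
qed



lemma sq_ratio_le:
  fixes K P q :: real
  assumes "0 \<le> q" "q < K" "K \<le> P"
  shows "(K - q)^2 / (P - q) \<le> K^2 / P"
proof -
  have "K^2 * (P - q) - (K - q)^2 * P = q * (K * (P - K) + P * (K - q))"
    by (simp add: power2_eq_square algebra_simps)
  also have "\<dots> \<ge> 0" using assms by (intro mult_nonneg_nonneg add_nonneg_nonneg) auto
  finally have "(K - q)^2 * P \<le> K^2 * (P - q)" by simp
  then show ?thesis using assms by (simp add: divide_simps)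
qed

lemma pair_bounds:
  assumes qK: "q < K" and KP: "K \<le> P"
  shows "real (card {p\<in>key_rings P K \<times> key_rings P K. q \<le> card (fst p \<inter> snd p)}) \<le> real ((P choose q) * ((P - q) choose (K - q))^2)"
    and "real (card {p\<in>key_rings P K \<times> key_rings P K. card (fst p \<inter> snd p) = q}) \<ge> real ((P choose q) * ((P - q) choose (K - q))^2) * (1 - real K^2 / real P)"
proof -
  let ?R = "key_rings P K"
  have fin: "finite (?R \<times> ?R)" using finite_key_rings by simp
  have "card {p\<in>?R \<times> ?R. q \<le> card (fst p \<inter> snd p)} = (\<Sum>p\<in>?R \<times> ?R. if q \<le> card (fst p \<inter> snd p) then 1 else 0)"
    using fin by (rule card_filter_sum)
  also have "\<dots> \<le> (\<Sum>p\<in>?R \<times> ?R. card (fst p \<inter> snd p) choose q)" by (intro sum_mono pointwise_ge)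
  also have "\<dots> = (P choose q) * ((P - q) choose (K - q))^2" using qK by (intro M_formula) auto
  finally show "real (card {p\<in>key_rings P K \<times> key_rings P K. q \<le> card (fst p \<inter> snd p)}) \<le> real ((P choose q) * ((P - q) choose (K - q))^2)"
    by linarith
  define Mq where "Mq = real ((P choose q) * ((P - q) choose (K - q))^2)"
  define M1 where "M1 = real ((P choose (q+1)) * ((P - (q+1)) choose (K - (q+1)))^2)"
  have "real (card {p\<in>?R \<times> ?R. card (fst p \<inter> snd p) = q}) = (\<Sum>p\<in>?R \<times> ?R. real (if card (fst p \<inter> snd p) = q then 1 else 0))"
    using card_filter_sum[OF fin, of "\<lambda>p. card (fst p \<inter> snd p) = q"] by (simp only: of_nat_sum)
  also have "\<dots> \<ge> (\<Sum>p\<in>?R \<times> ?R. real (card (fst p \<inter> snd p) choose q) - real (q+1) * real (card (fst p \<inter> snd p) choose (q+1)))"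
    by (intro sum_mono pointwise_eq)
  finally have ge: "real (card {p\<in>?R \<times> ?R. card (fst p \<inter> snd p) = q}) \<ge>
      real (\<Sum>p\<in>?R \<times> ?R. card (fst p \<inter> snd p) choose q) - real (q+1) * real (\<Sum>p\<in>?R \<times> ?R. card (fst p \<inter> snd p) choose (q+1))"
    by (simp add: sum_subtractf sum_distrib_left)
  have e1: "real (\<Sum>p\<in>?R \<times> ?R. card (fst p \<inter> snd p) choose q) = Mq" unfolding Mq_def using qK by (subst M_formula) auto
  have e2: "real (\<Sum>p\<in>?R \<times> ?R. card (fst p \<inter> snd p) choose (q+1)) = M1" unfolding M1_def using qK by (subst M_formula) auto
  have Pq: "real P - real q > 0" using qK KP by simp
  have "real (q+1) * M1 * (real P - real q) = Mq * (real K - real q)^2"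
    unfolding Mq_def M1_def using M_ratio[of q K P] qK KP by simp
  then have "real (q+1) * M1 = Mq * ((real K - real q)^2 / (real P - real q))"
    using Pq by (simp add: field_simps)
  also have "\<dots> \<le> Mq * (real K^2 / real P)"
    using qK KP by (intro mult_left_mono sq_ratio_le) (auto simp: Mq_def)
  finally have "real (q+1) * M1 \<le> Mq * (real K^2 / real P)" .
  then show "real (card {p\<in>key_rings P K \<times> key_rings P K. card (fst p \<inter> snd p) = q}) \<ge> real ((P choose q) * ((P - q) choose (K - q))^2) * (1 - real K^2 / real P)"
    using ge e1 e2 unfolding Mq_def[symmetric] by (simp add: algebra_simps)
qed

lemma Mq_bounds:
  assumes qK: "q < K" and KP: "K \<le> P"
  shows "real ((P choose q) * ((P - q) choose (K - q))^2) \<le> real (P choose K)^2 * (real K ^ (2*q) / (fact q * (real P - real q)^q))"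
    and "real ((P choose q) * ((P - q) choose (K - q))^2) \<ge> real (P choose K)^2 * ((real K - real q) ^ (2*q) / (fact q * real P ^ q))"
proof -
  define N where "N = real (P choose K)"
  define C where "C = real ((P - q) choose (K - q))"
  have fP: "ff P q > 0" using qK KP by (intro ff_pos) auto
  have fK: "ff K q > 0" using qK by (intro ff_pos) auto
  have r: "N * ff K q = C * ff P q" unfolding N_def C_def using qK KP by (intro ff_ratio) auto
  have b: "real (P choose q) * fact q = ff P q" by (rule binom_ff)
  have fq: "(fact q :: real) > 0" by simp
  have Mq: "real ((P choose q) * ((P - q) choose (K - q))^2) = N^2 * (ff K q)^2 / (fact q * ff P q)"
  proof -
    have "real ((P choose q) * ((P - q) choose (K - q))^2) * (fact q * ff P q) = (real (P choose q) * fact q) * (C * ff P q)^2 / ff P q"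
      using fP by (simp add: C_def power2_eq_square field_simps)
    also have "\<dots> = (N * ff K q)^2" using fP unfolding b r[symmetric] by (simp add: power2_eq_square)
    finally show ?thesis using fP fq by (simp add: field_simps power_mult_distrib)
  qed
  have Pq: "real P - real q > 0" using qK KP by simp
  have "N^2 * (ff K q)^2 / (fact q * ff P q) \<le> N^2 * (real K ^ q)^2 / (fact q * (real P - real q)^q)"
  proof (intro frac_le mult_left_mono power_mono mult_pos_pos)
    show "ff K q \<le> real K ^ q" using qK by (intro ff_le) auto
    show "(real P - real q)^q \<le> ff P q" using qK KP by (intro ff_ge) auto
  qed (use fK Pq in auto)
  then show "real ((P choose q) * ((P - q) choose (K - q))^2) \<le> real (P choose K)^2 * (real K ^ (2*q) / (fact q * (real P - real q)^q))"
    unfolding Mq N_def by (simp add: power_mult[symmetric] mult.commute)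
  have "N^2 * ((real K - real q) ^ q)^2 / (fact q * real P ^ q) \<le> N^2 * (ff K q)^2 / (fact q * ff P q)"
  proof (intro frac_le mult_left_mono power_mono mult_pos_pos)
    show "(real K - real q) ^ q \<le> ff K q" using qK by (intro ff_ge) auto
    show "ff P q \<le> real P ^ q" using qK KP by (intro ff_le) auto
  qed (use fP qK in auto)
  then show "real ((P choose q) * ((P - q) choose (K - q))^2) \<ge> real (P choose K)^2 * ((real K - real q) ^ (2*q) / (fact q * real P ^ q))"
    unfolding Mq N_def by (simp add: power_mult[symmetric] mult.commute)
qed



lemma card_outcomes_filter:
  "card {x \<in> outcomes P K m. case x of (A, B, Cs) \<Rightarrow> \<Phi> A B \<and> \<Psi> A B Cs}
   = (\<Sum>p\<in>{p\<in>key_rings P K \<times> key_rings P K. \<Phi> (fst p) (snd p)}. card {Cs\<in>LL P K m. \<Psi> (fst p) (snd p) Cs})"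
proof -
  let ?S = "SIGMA p:{p\<in>key_rings P K \<times> key_rings P K. \<Phi> (fst p) (snd p)}. {Cs\<in>LL P K m. \<Psi> (fst p) (snd p) Cs}"
  have eq: "{x \<in> outcomes P K m. case x of (A, B, Cs) \<Rightarrow> \<Phi> A B \<and> \<Psi> A B Cs} = (\<lambda>(p,Cs). (fst p, snd p, Cs)) ` ?S"
  proof (intro set_eqI iffI)
    fix x assume "x \<in> {x \<in> outcomes P K m. case x of (A, B, Cs) \<Rightarrow> \<Phi> A B \<and> \<Psi> A B Cs}"
    then obtain A B Cs where x: "x = (A, B, Cs)" "A \<in> key_rings P K" "B \<in> key_rings P K" "Cs \<in> LL P K m" "\<Phi> A B" "\<Psi> A B Cs"
      by (cases x) (auto simp: outcomes_def LL_def)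
    then have "((A, B), Cs) \<in> ?S" by auto
    then show "x \<in> (\<lambda>(p,Cs). (fst p, snd p, Cs)) ` ?S" unfolding x(1) by (intro image_eqI[of _ _ "((A, B), Cs)"]) auto
  next
    fix x assume "x \<in> (\<lambda>(p,Cs). (fst p, snd p, Cs)) ` ?S"
    then show "x \<in> {x \<in> outcomes P K m. case x of (A, B, Cs) \<Rightarrow> \<Phi> A B \<and> \<Psi> A B Cs}"
      by (auto simp: outcomes_def LL_def)
  qed
  have inj: "inj_on (\<lambda>(p,Cs). (fst p, snd p, Cs)) ?S" by (auto simp: inj_on_def)
  have fin: "finite {p\<in>key_rings P K \<times> key_rings P K. \<Phi> (fst p) (snd p)}" using finite_key_rings by simp
  show ?thesis unfolding eq card_image[OF inj]
    using fin finite_LL by (subst card_SigmaI) auto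
qed

lemma Sge_pos:
  assumes "q \<le> K" "K \<le> P"
  shows "card {p\<in>key_rings P K \<times> key_rings P K. q \<le> card (fst p \<inter> snd p)} > 0"
proof -
  have k: "{..<K} \<in> key_rings P K" using assms unfolding key_rings_def by auto
  have "({..<K}, {..<K}) \<in> {p\<in>key_rings P K \<times> key_rings P K. q \<le> card (fst p \<inter> snd p)}"
    using assms k by simp
  moreover have "finite {p\<in>key_rings P K \<times> key_rings P K. q \<le> card (fst p \<inter> snd p)}" using finite_key_rings by simp
  ultimately show ?thesis unfolding card_gt_0_iff by blast
qed

lemma ps_bounds:
  assumes qK: "q < K" and KP: "K \<le> P" and KK: "real K^2 \<le> real P"
  shows "p_s P K q \<le> real K ^ (2*q) / (fact q * (real P - real q)^q)"
    and "p_s P K q \<ge> (1 - real K^2/real P) * ((real K - real q) ^ (2*q) / (fact q * real P ^ q))"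
proof -
  let ?R = "key_rings P K"
  have set: "{(A, B). A \<in> ?R \<and> B \<in> ?R \<and> q \<le> card (A \<inter> B)} = {p\<in>?R \<times> ?R. q \<le> card (fst p \<inter> snd p)}" by auto
  define N where "N = real (P choose K)"
  have Np: "N > 0" unfolding N_def using KP by simp
  have ps: "p_s P K q = real (card {p\<in>?R \<times> ?R. q \<le> card (fst p \<inter> snd p)}) / N^2"
    unfolding p_s_def set N_def card_key_rings by simp
  have N2: "N^2 > 0" using Np by simp
  have "real (card {p\<in>?R \<times> ?R. q \<le> card (fst p \<inter> snd p)}) \<le> (real K ^ (2*q) / (fact q * (real P - real q)^q)) * N^2"
    using pair_bounds(1)[OF qK KP] Mq_bounds(1)[OF qK KP] unfolding N_def by (simp only: mult.commute)
  then show "p_s P K q \<le> real K ^ (2*q) / (fact q * (real P - real q)^q)"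
    unfolding ps using pos_divide_le_eq[OF N2] by blast
  have "card {p\<in>?R \<times> ?R. card (fst p \<inter> snd p) = q} \<le> card {p\<in>?R \<times> ?R. q \<le> card (fst p \<inter> snd p)}"
    using finite_key_rings by (intro card_mono) auto
  then have "real (card {p\<in>?R \<times> ?R. q \<le> card (fst p \<inter> snd p)}) \<ge> real ((P choose q) * ((P - q) choose (K - q))^2) * (1 - real K^2 / real P)"
    using pair_bounds(2)[OF qK KP] by linarith
  moreover have "real ((P choose q) * ((P - q) choose (K - q))^2) * (1 - real K^2 / real P) \<ge> N^2 * ((real K - real q) ^ (2*q) / (fact q * real P ^ q)) * (1 - real K^2 / real P)"
  proof (rule mult_right_mono)
    show "0 \<le> 1 - real K^2 / real P" using KK KP qK by simp
  qed (use Mq_bounds(2)[OF qK KP] in \<open>simp add: N_def\<close>)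
  ultimately have "real (card {p\<in>?R \<times> ?R. q \<le> card (fst p \<inter> snd p)}) \<ge> ((1 - real K^2/real P) * ((real K - real q) ^ (2*q) / (fact q * real P ^ q))) * N^2"
    by (simp only: mult.commute mult.left_commute)
  then show "p_s P K q \<ge> (1 - real K^2/real P) * ((real K - real q) ^ (2*q) / (fact q * real P ^ q))"
    unfolding ps using pos_le_divide_eq[OF N2] by blast
qed



lemma pc_bounds:
  assumes qK: "q < K" and KP: "K \<le> P"
  shows "p_compromised P K q m \<le> (real m * real K / real P)^q"
    and "real m ^ q * ((real K - real q) / real P)^q - real q * real m ^ (q+1) * (real K / real P)^(q+1) \<ge> 0
         \<Longrightarrow> real K^2 \<le> real P \<Longrightarrow>
         p_compromised P K q m \<ge> (1 - real K^2/real P) *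
           (real m ^ q * ((real K - real q) / real P)^q - real q * real m ^ (q+1) * (real K / real P)^(q+1))"
proof -
  let ?R = "key_rings P K"
  define Sge where "Sge = {p\<in>?R \<times> ?R. q \<le> card (fst p \<inter> snd p)}"
  define Seq where "Seq = {p\<in>?R \<times> ?R. card (fst p \<inter> snd p) = q}"
  define cov where "cov p = card {Cs\<in>LL P K m. fst p \<inter> snd p \<subseteq> \<Union>(set Cs)}" for p
  define N where "N = real (P choose K)"
  define u where "u = (real m * real K / real P)^q"
  define lb where "lb = real m ^ q * ((real K - real q) / real P)^q - real q * real m ^ (q+1) * (real K / real P)^(q+1)"
  have Np: "N > 0" unfolding N_def using KP by simp
  have finS: "finite Sge" unfolding Sge_def using finite_key_rings by simp
  have Sp: "card Sge > 0" unfolding Sge_def using Sge_pos qK KP by simp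
  have num: "card {(A, B, Cs) \<in> outcomes P K m. q \<le> card (A \<inter> B) \<and> A \<inter> B \<subseteq> \<Union> (set Cs)} = (\<Sum>p\<in>Sge. cov p)"
  proof -
    have "{(A, B, Cs) \<in> outcomes P K m. q \<le> card (A \<inter> B) \<and> A \<inter> B \<subseteq> \<Union> (set Cs)} =
        {x \<in> outcomes P K m. case x of (A, B, Cs) \<Rightarrow> q \<le> card (A \<inter> B) \<and> A \<inter> B \<subseteq> \<Union> (set Cs)}" by auto
    then show ?thesis unfolding Sge_def cov_def
      using card_outcomes_filter[of P K m "\<lambda>A B. q \<le> card (A \<inter> B)" "\<lambda>A B Cs. A \<inter> B \<subseteq> \<Union>(set Cs)"] by simp
  qed
  have den: "card {(A, B, Cs) \<in> outcomes P K m. q \<le> card (A \<inter> B)} = card Sge * (P choose K)^m"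
  proof -
    have "{(A, B, Cs) \<in> outcomes P K m. q \<le> card (A \<inter> B)} =
        {x \<in> outcomes P K m. case x of (A, B, Cs) \<Rightarrow> q \<le> card (A \<inter> B) \<and> True}" by auto
    then show ?thesis unfolding Sge_def
      using card_outcomes_filter[of P K m "\<lambda>A B. q \<le> card (A \<inter> B)" "\<lambda>_ _ _. True"] by (simp add: card_LL)
  qed
  have pc: "p_compromised P K q m = (\<Sum>p\<in>Sge. real (cov p)) / (real (card Sge) * N^m)"
    unfolding p_compromised_def num den N_def by simp
  have D: "real (card Sge) * N^m > 0" using Sp Np by simp
  have covfin: "finite {Cs\<in>LL P K m. Q \<subseteq> \<Union>(set Cs)}" for Q using finite_LL by simp
  have cu: "real (cov p) \<le> N^m * u" if p: "p \<in> Sge" for p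
  proof -
    have AB: "fst p \<inter> snd p \<subseteq> {..<P}" "q \<le> card (fst p \<inter> snd p)" using p unfolding Sge_def by (auto dest!: key_ringD)
    obtain Q where Q: "Q \<subseteq> fst p \<inter> snd p" "card Q = q" using obtain_subset_with_card_n[OF AB(2)] by metis
    have "cov p \<le> card {Cs\<in>LL P K m. Q \<subseteq> \<Union>(set Cs)}" unfolding cov_def
      using Q(1) covfin by (intro card_mono) auto
    then have "real (cov p) \<le> real (card {Cs\<in>LL P K m. Q \<subseteq> \<Union>(set Cs)})" by simp
    also have "\<dots> \<le> N^m * u" unfolding N_def u_def
      using cover_bounds(1)[of Q P q K m] Q AB qK KP by auto
    finally show ?thesis .
  qed
  have "(\<Sum>p\<in>Sge. real (cov p)) \<le> (\<Sum>p\<in>Sge. N^m * u)" using cu by (intro sum_mono) auto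
  also have "\<dots> = u * (real (card Sge) * N^m)" by simp
  finally have "(\<Sum>p\<in>Sge. real (cov p)) \<le> u * (real (card Sge) * N^m)" .
  then show "p_compromised P K q m \<le> (real m * real K / real P)^q"
    unfolding pc u_def[symmetric] using pos_divide_le_eq[OF D] by blast
  assume lb0: "real m ^ q * ((real K - real q) / real P)^q - real q * real m ^ (q+1) * (real K / real P)^(q+1) \<ge> 0"
    and KK: "real K^2 \<le> real P"
  have lb0': "lb \<ge> 0" using lb0 unfolding lb_def .
  have cl: "real (cov p) \<ge> N^m * lb" if p: "p \<in> Seq" for p
  proof -
    have AB: "fst p \<inter> snd p \<subseteq> {..<P}" "card (fst p \<inter> snd p) = q" using p unfolding Seq_def by (auto dest!: key_ringD)
    show ?thesis unfolding N_def lb_def cov_def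
      using cover_bounds(2)[of "fst p \<inter> snd p" P q K m] AB qK KP by auto
  qed
  have SeqS: "Seq \<subseteq> Sge" unfolding Seq_def Sge_def by auto
  have "(\<Sum>p\<in>Sge. real (cov p)) \<ge> (\<Sum>p\<in>Seq. real (cov p))"
    using SeqS finS by (intro sum_mono2) auto
  moreover have "(\<Sum>p\<in>Seq. real (cov p)) \<ge> (\<Sum>p\<in>Seq. N^m * lb)" using cl by (intro sum_mono) auto
  moreover have "(\<Sum>p\<in>Seq. N^m * lb) = real (card Seq) * (N^m * lb)" by simp
  moreover have "real (card Seq) \<ge> real ((P choose q) * ((P - q) choose (K - q))^2) * (1 - real K^2 / real P)"
    unfolding Seq_def by (rule pair_bounds(2)[OF qK KP])
  moreover have "real ((P choose q) * ((P - q) choose (K - q))^2) \<ge> real (card Sge)"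
    unfolding Sge_def using pair_bounds(1)[OF qK KP] by simp
  moreover have "1 - real K^2 / real P \<ge> 0" using KK qK KP by simp
  moreover have "N^m * lb \<ge> 0" using Np lb0' by simp
  ultimately have "(\<Sum>p\<in>Sge. real (cov p)) \<ge> real (card Sge) * (1 - real K^2 / real P) * (N^m * lb)"
    by (smt (verit, best) mult_right_mono)
  then have "(\<Sum>p\<in>Sge. real (cov p)) \<ge> ((1 - real K^2 / real P) * lb) * (real (card Sge) * N^m)"
    by (simp only: mult.commute mult.left_commute mult.assoc)
  then show "p_compromised P K q m \<ge> (1 - real K^2/real P) *
           (real m ^ q * ((real K - real q) / real P)^q - real q * real m ^ (q+1) * (real K / real P)^(q+1))"
    unfolding pc lb_def[symmetric] using pos_le_divide_eq[OF D] by blast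
qed



lemma alg_lb:
  fixes m K P q :: real and r :: nat
  assumes "K > 0" "P > 0"
  shows "m ^ r * ((K - q) / P)^r - q * m ^ (r+1) * (K / P)^(r+1) = (m * K / P)^r * ((1 - q / K)^r - q * (m * K / P))"
proof -
  have a: "(m * K / P) * (1 - q / K) = m * ((K - q) / P)" using assms by (simp add: field_simps)
  have "m ^ r * ((K - q) / P)^r = (m * K / P)^r * (1 - q / K)^r"
  proof -
    have "m ^ r * ((K - q) / P)^r = (m * ((K - q) / P))^r" by (simp only: power_mult_distrib)
    also have "\<dots> = ((m * K / P) * (1 - q / K))^r" by (simp only: a)
    also have "\<dots> = (m * K / P)^r * (1 - q / K)^r" by (simp only: power_mult_distrib)
    finally show ?thesis .
  qed
  moreover have "q * m ^ (r+1) * (K / P)^(r+1) = (m * K / P)^r * (q * (m * K / P))"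
    by (simp add: power_mult_distrib power_divide field_simps)
  ultimately show ?thesis by (simp only: right_diff_distrib)
qed

lemma alg_ratio:
  fixes m K P :: real and q :: nat
  assumes "K > 0" "P > 0"
  shows "(m * K / P)^q / (K ^ (2*q) / (fact q * P ^ q)) = fact q * (m / K)^q"
  using assms by (simp add: power_mult_distrib power_divide power_mult field_simps power2_eq_square)



theorem theorem2:
  fixes P K m :: "nat \<Rightarrow> nat" and q :: nat
  assumes "q \<ge> 1"
    and "\<And>n. q \<le> K n \<and> K n \<le> P n"
    and "\<And>n. m n \<ge> 1"
    and "(\<lambda>n. real (m n)) \<in> o(\<lambda>n. sqrt (real (P n) / real (K n) ^ 2))"
    and "filterlim (\<lambda>n. real (K n)) at_top sequentially"
  shows "((\<lambda>n. p_compromised (P n) (K n) q (m n))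
           \<sim>[sequentially] (\<lambda>n. (real (m n) * real (K n) / real (P n)) ^ q)) \<and>
         ((\<lambda>n. p_compromised (P n) (K n) q (m n) / p_s (P n) (K n) q)
           \<sim>[sequentially] (\<lambda>n. fact q * (real (m n) / real (K n)) ^ q))"
proof -
  note q1 = assms(1) and KP = assms(2) and m1 = assms(3) and mo = assms(4) and Kinf = assms(5)
  have Kpos: "real (K n) > 0" for n using KP[of n] q1 by simp
  have Ppos: "real (P n) > 0" for n using KP[of n] q1 by simp
  have mpos: "real (m n) \<ge> 1" for n using m1[of n] by simp
  have Pinf: "filterlim (\<lambda>n. real (P n)) at_top sequentially"
    using Kinf by (rule filterlim_at_top_mono) (use KP in auto)
  have evKq: "eventually (\<lambda>n. q < K n) sequentially"
  proof -
    have "eventually (\<lambda>n. real q < real (K n)) sequentially"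
      using Kinf unfolding filterlim_at_top_dense by blast
    then show ?thesis by simp
  qed
  define g where "g n = (real (m n) * real (K n))^2 / real (P n)" for n
  have g_nonneg: "g n \<ge> 0" for n unfolding g_def by simp
  have g0: "g \<longlonglongrightarrow> 0"
  proof (rule order_tendstoI)
    fix a :: real assume "a < 0"
    then have "\<forall>n. a < g n" using g_nonneg by (meson less_le_trans)
    then show "eventually (\<lambda>n. a < g n) sequentially" by (rule always_eventually)
  next
    fix a :: real assume a: "0 < a"
    have c: "sqrt (a/2) > 0" using a by simp
    have ev: "eventually (\<lambda>n. norm (real (m n)) \<le> sqrt (a/2) * norm (sqrt (real (P n) / real (K n) ^ 2))) sequentially"
      using landau_o.smallD[OF mo c] .
    show "eventually (\<lambda>n. g n < a) sequentially"
      using ev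
    proof eventually_elim
      case (elim n)
      have "real (m n) \<le> sqrt (a/2) * sqrt (real (P n) / real (K n) ^ 2)" using elim by simp
      then have "real (m n)^2 \<le> (sqrt (a/2) * sqrt (real (P n) / real (K n) ^ 2))^2"
        by (intro power_mono) auto
      also have "\<dots> = (a/2) * (real (P n) / real (K n) ^ 2)"
        using a Ppos[of n] by (simp add: power_mult_distrib)
      finally have "real (m n)^2 * real (K n)^2 \<le> (a/2) * real (P n)"
        using Kpos[of n] by (simp add: field_simps)
      then have "g n \<le> a/2" unfolding g_def using Ppos[of n] by (simp add: field_simps power_mult_distrib)
      then show ?case using a by simp
    qed
  qed
  have x1: "(\<lambda>n. real (K n)^2 / real (P n)) \<longlonglongrightarrow> 0"
  proof (rule tendsto_sandwich[of "\<lambda>_. 0" _ _ g])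
    show "\<forall>\<^sub>F n in sequentially. 0 \<le> real (K n)^2 / real (P n)" by simp
    show "\<forall>\<^sub>F n in sequentially. real (K n)^2 / real (P n) \<le> g n"
    proof (rule always_eventually, rule allI)
      fix n
      have "real (K n)^2 \<le> (real (m n) * real (K n))^2"
        using mpos[of n] Kpos[of n] by (simp add: power_mult_distrib)
      then show "real (K n)^2 / real (P n) \<le> g n" unfolding g_def using Ppos[of n]
        by (intro divide_right_mono) auto
    qed
  qed (use g0 in auto)
  have x2: "(\<lambda>n. real (m n) * real (K n) / real (P n)) \<longlonglongrightarrow> 0"
  proof (rule tendsto_sandwich[of "\<lambda>_. 0" _ _ g])
    show "\<forall>\<^sub>F n in sequentially. 0 \<le> real (m n) * real (K n) / real (P n)" by simp
    show "\<forall>\<^sub>F n in sequentially. real (m n) * real (K n) / real (P n) \<le> g n"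
    proof (rule always_eventually, rule allI)
      fix n
      have K1: "real (K n) \<ge> 1" using KP[of n] q1 by simp
      have "1 * 1 \<le> real (m n) * real (K n)" using mpos[of n] K1 by (intro mult_mono) auto
      then have "1 \<le> real (m n) * real (K n)" by simp
      then have "(real (m n) * real (K n)) * 1 \<le> (real (m n) * real (K n)) * (real (m n) * real (K n))"
        by (intro mult_left_mono) auto
      then have "real (m n) * real (K n) \<le> (real (m n) * real (K n))^2"
        by (simp add: power2_eq_square)
      then show "real (m n) * real (K n) / real (P n) \<le> g n" unfolding g_def using Ppos[of n]
        by (intro divide_right_mono) auto
    qed
  qed (use g0 in auto)
  have x3: "(\<lambda>n. real q / real (K n)) \<longlonglongrightarrow> 0"
    by (rule tendsto_divide_0[OF tendsto_const filterlim_at_top_imp_at_infinity[OF Kinf]])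
  have x4: "(\<lambda>n. real q / real (P n)) \<longlonglongrightarrow> 0"
    by (rule tendsto_divide_0[OF tendsto_const filterlim_at_top_imp_at_infinity[OF Pinf]])
  have evKK: "eventually (\<lambda>n. real (K n)^2 \<le> real (P n)) sequentially"
  proof -
    have "eventually (\<lambda>n. real (K n)^2 / real (P n) < 1) sequentially"
      using x1 by (rule order_tendstoD) simp
    then show ?thesis
      by eventually_elim (use Ppos in \<open>simp add: field_simps\<close>)
  qed
  define u where "u n = (real (m n) * real (K n) / real (P n)) ^ q" for n
  define L where "L n = (1 - real (K n)^2 / real (P n)) * ((1 - real q / real (K n))^q - real q * (real (m n) * real (K n) / real (P n)))" for n
  have upos: "u n > 0" for n unfolding u_def using mpos[of n] Kpos[of n] Ppos[of n] by simp
  have L1: "L \<longlonglongrightarrow> 1"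
  proof -
    have "L \<longlonglongrightarrow> (1 - 0) * ((1 - 0)^q - real q * 0)"
      unfolding L_def by (intro tendsto_intros x1 x2 x3)
    then show ?thesis by simp
  qed
  have inner1: "(\<lambda>n. (1 - real q / real (K n))^q - real q * (real (m n) * real (K n) / real (P n))) \<longlonglongrightarrow> 1"
  proof -
    have "(\<lambda>n. (1 - real q / real (K n))^q - real q * (real (m n) * real (K n) / real (P n))) \<longlonglongrightarrow> (1 - 0)^q - real q * 0"
      by (intro tendsto_intros x2 x3)
    then show ?thesis by simp
  qed
  have evinner: "eventually (\<lambda>n. (1 - real q / real (K n))^q - real q * (real (m n) * real (K n) / real (P n)) > 0) sequentially"
    using inner1 by (rule order_tendstoD) simp
  have bounds1: "eventually (\<lambda>n. p_compromised (P n) (K n) q (m n) \<in> {L n * u n .. u n}) sequentially"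
    using evKq evKK evinner
  proof eventually_elim
    case (elim n)
    have lbeq: "real (m n) ^ q * ((real (K n) - real q) / real (P n))^q - real q * real (m n) ^ (q+1) * (real (K n) / real (P n))^(q+1)
        = u n * ((1 - real q / real (K n))^q - real q * (real (m n) * real (K n) / real (P n)))"
      unfolding u_def by (rule alg_lb[OF Kpos Ppos])
    have lb0: "real (m n) ^ q * ((real (K n) - real q) / real (P n))^q - real q * real (m n) ^ (q+1) * (real (K n) / real (P n))^(q+1) \<ge> 0"
      unfolding lbeq using elim(3) upos[of n] by simp
    have up: "p_compromised (P n) (K n) q (m n) \<le> u n"
      unfolding u_def using pc_bounds(1)[OF elim(1)] KP[of n] by simp
    have lo: "p_compromised (P n) (K n) q (m n) \<ge> L n * u n"
      using pc_bounds(2)[OF elim(1) _ lb0 elim(2)] KP[of n] unfolding lbeq L_def by (simp add: algebra_simps)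
    show ?case using up lo by simp
  qed
  have Lu: "(\<lambda>n. L n * u n) \<sim>[sequentially] u"
  proof (rule asymp_equivI')
    have "(\<lambda>n. L n * u n / u n) = L" using upos by (intro ext) (simp add: less_imp_neq[symmetric])
    then show "((\<lambda>n. L n * u n / u n) \<longlongrightarrow> 1) sequentially" using L1 by simp
  qed
  have claim1: "(\<lambda>n. p_compromised (P n) (K n) q (m n)) \<sim>[sequentially] u"
    by (rule asymp_equiv_sandwich_real[OF Lu asymp_equiv_refl bounds1])
  define \<mu> where "\<mu> n = real (K n) ^ (2*q) / (fact q * real (P n) ^ q)" for n
  have mupos: "\<mu> n > 0" for n unfolding \<mu>_def using Kpos[of n] Ppos[of n] by simp
  define Ls where "Ls n = (1 - real (K n)^2 / real (P n)) * (1 - real q / real (K n)) ^ (2*q)" for n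
  define Us where "Us n = (1 / (1 - real q / real (P n))) ^ q" for n
  have Ls1: "Ls \<longlonglongrightarrow> 1"
  proof -
    have "Ls \<longlonglongrightarrow> (1 - 0) * (1 - 0) ^ (2*q)" unfolding Ls_def by (intro tendsto_intros x1 x3)
    then show ?thesis by simp
  qed
  have Us1: "Us \<longlonglongrightarrow> 1"
  proof -
    have "Us \<longlonglongrightarrow> (1 / (1 - 0)) ^ q" unfolding Us_def by (intro tendsto_intros x4) simp
    then show ?thesis by simp
  qed
  have bounds2: "eventually (\<lambda>n. p_s (P n) (K n) q \<in> {Ls n * \<mu> n .. Us n * \<mu> n}) sequentially"
    using evKq evKK
  proof eventually_elim
    case (elim n)
    have Pq: "real (P n) - real q > 0" using elim(1) KP[of n] by simp
    have e1: "Ls n * \<mu> n = (1 - real (K n)^2/real (P n)) * ((real (K n) - real q) ^ (2*q) / (fact q * real (P n) ^ q))"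
    proof -
      have "(1 - real q / real (K n)) ^ (2*q) * real (K n) ^ (2*q) = (real (K n) - real q) ^ (2*q)"
        using Kpos[of n] by (simp add: power_mult_distrib[symmetric] field_simps)
      then show ?thesis unfolding Ls_def \<mu>_def by (simp add: field_simps)
    qed
    have e2: "Us n * \<mu> n = real (K n) ^ (2*q) / (fact q * (real (P n) - real q)^q)"
    proof -
      have "1 / (1 - real q / real (P n)) = real (P n) / (real (P n) - real q)"
        using Ppos[of n] Pq by (simp add: field_simps)
      then have "Us n = real (P n) ^ q / (real (P n) - real q) ^ q" unfolding Us_def by (simp add: power_divide)
      then show ?thesis unfolding \<mu>_def using Ppos[of n] Pq by (simp add: field_simps)
    qed
    show ?case using ps_bounds[OF elim(1) _ elim(2)] KP[of n] unfolding e1 e2 by simp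
  qed
  have ps_l: "(\<lambda>n. Ls n * \<mu> n) \<sim>[sequentially] \<mu>"
  proof (rule asymp_equivI')
    have "(\<lambda>n. Ls n * \<mu> n / \<mu> n) = Ls" using mupos by (intro ext) (simp add: less_imp_neq[symmetric])
    then show "((\<lambda>n. Ls n * \<mu> n / \<mu> n) \<longlongrightarrow> 1) sequentially" using Ls1 by simp
  qed
  have ps_u: "(\<lambda>n. Us n * \<mu> n) \<sim>[sequentially] \<mu>"
  proof (rule asymp_equivI')
    have "(\<lambda>n. Us n * \<mu> n / \<mu> n) = Us" using mupos by (intro ext) (simp add: less_imp_neq[symmetric])
    then show "((\<lambda>n. Us n * \<mu> n / \<mu> n) \<longlongrightarrow> 1) sequentially" using Us1 by simp
  qed
  have claim_ps: "(\<lambda>n. p_s (P n) (K n) q) \<sim>[sequentially] \<mu>"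
    by (rule asymp_equiv_sandwich_real[OF ps_l ps_u bounds2])
  have claim2': "(\<lambda>n. p_compromised (P n) (K n) q (m n) / p_s (P n) (K n) q) \<sim>[sequentially] (\<lambda>n. u n / \<mu> n)"
    by (rule asymp_equiv_divide[OF claim1 claim_ps])
  have "(\<lambda>n. u n / \<mu> n) = (\<lambda>n. fact q * (real (m n) / real (K n)) ^ q)"
    unfolding u_def \<mu>_def by (intro ext alg_ratio Kpos Ppos)
  then show ?thesis using claim1 claim2' unfolding u_def by simp
qed

end
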